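(* Let $j\in\mathbb Z$, let $\sigma$ be a $2$-cell of $X_j$ with vertical $1$-cells $e_1,e_2$. If $\bar\sigma_1,\dots,\bar\sigma_\ell$ are $2$-cells of $X_{j+1}$ contained in $\pi_j(\sigma)$ forming a chain (consecutive ones intersect) that joins $\pi_j(e_1)$ to $\pi_j(e_2)$ (i.e. $\bar\sigma_1\cap\pi_j(e_1)\ne\emptyset$ and $\bar\sigma_\ell\cap\pi_j(e_2)\ne\emptyset$), then $\ell\ge m$.
   Context: Standing construction ($n=2$). Fix an integer $L\ge100$, $m=4$, $m_v=3L$. For $j\in\mathbb Z$, $Y_j$ is the cell complex on $\mathbb R^2$ given by the tiling by rectangles $[am^{-j},(a+1)m^{-j}]\times[bm_v^{-j},(b+1)m_v^{-j}]$, $a,b\in\mathbb Z$; a $1$-cell is vertical if it is a translate of $\{0\}\times[0,m_v^{-j}]$. Let $\Phi(x,y)=(m^{-1}x,m_v^{-1}y)$. For $k,\ell\in\mathbb Z$, $i\in\{1,2,3\}$, $a_{k,\ell,i}=\{k+\tfrac i4\}\times[(3\ell+i-1)m_v^{-1},(3\ell+i)m_v^{-1}]$. $\mathcal R$ is the equivalence relation on $\mathbb R^2$ generated by $p\sim p+(0,m_v^{-1})$ for $p\in a_{k,\ell,i}$. $\Phi^j_*\mathcal R=\{(\Phi^jp,\Phi^jq):(p,q)\in\mathcal R\}$; $\mathcal R_j$ is generated by $\Phi^i_*\mathcal R$, $i<j$. $X_j=\mathbb R^2/\mathcal R_j$, $\hat\pi^j$ the quotient map, $\pi_j:X_j\to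 X_{j+1}$ the induced map; $X_j$ has the CW structure whose open cells are images of open cells of $Y_j$, with vertical cells being images of vertical cells. *)

theory Defs
  imports Complex_Main
begin

definition mh :: real where "mh = 4"

definition mv :: "int \<Rightarrow> real" where "mv L = 3 * real_of_int L"

definition gen_equiv :: "('a \<times> 'a) set \<Rightarrow> ('a \<times> 'a) set" where
  "gen_equiv S = (S \<union> S\<inverse>)\<^sup>*"

definition aseg :: "int \<Rightarrow> int \<Rightarrow> int \<Rightarrow> int \<Rightarrow> (real \<times> real) set" where
  "aseg L k l i = {(x, y). x = real_of_int k + real_of_int i / mh \<and>
      (3 * real_of_int l + real_of_int i - 1) / mv L \<le> y \<and> y \<le> (3 * real_of_int l + real_of_int i) / mv L}"

definition Rbase :: "int \<Rightarrow> ((real \<times> real) \<times> (real \<times> real)) set" where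
  "Rbase L = gen_equiv {(p, (fst p, snd p + 1 / mv L)) | p. \<exists>k l i. i \<in> {1, 2, 3} \<and> p \<in> aseg L k l i}"

text \<open>Phi(x,y) = (x/m, y/m_v), and its integer powers Phi^i(x,y) = (m^(-i) x, m_v^(-i) y).\<close>
definition PhiPow :: "int \<Rightarrow> int \<Rightarrow> real \<times> real \<Rightarrow> real \<times> real" where
  "PhiPow L i p = (mh powi (- i) * fst p, mv L powi (- i) * snd p)"

definition push :: "int \<Rightarrow> int \<Rightarrow> ((real \<times> real) \<times> (real \<times> real)) set \<Rightarrow> ((real \<times> real) \<times> (real \<times> real)) set" where
  "push L i S = {(PhiPow L i p, PhiPow L i q) | p q. (p, q) \<in> S}"

definition Rj :: "int \<Rightarrow> int \<Rightarrow> ((real \<times> real) \<times> (real \<times> real)) set" where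
  "Rj L j = gen_equiv (\<Union>i\<in>{i. i < j}. push L i (Rbase L))"

definition Xsp :: "int \<Rightarrow> int \<Rightarrow> (real \<times> real) set set" where
  "Xsp L j = UNIV // Rj L j"

definition qmap :: "int \<Rightarrow> int \<Rightarrow> real \<times> real \<Rightarrow> (real \<times> real) set" where
  "qmap L j p = Rj L j `` {p}"

definition piMap :: "int \<Rightarrow> int \<Rightarrow> (real \<times> real) set \<Rightarrow> (real \<times> real) set" where
  "piMap L j c = qmap L (j + 1) (SOME p. p \<in> c)"

definition rectY :: "int \<Rightarrow> int \<Rightarrow> int \<Rightarrow> int \<Rightarrow> (real \<times> real) set" where
  "rectY L j a b = {real_of_int a * mh powi (- j) .. real_of_int (a + 1) * mh powi (- j)} \<times>
                   {real_of_int b * mv L powi (- j) .. real_of_int (b + 1) * mv L powi (- j)}"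

definition vedgeY :: "int \<Rightarrow> int \<Rightarrow> int \<Rightarrow> int \<Rightarrow> (real \<times> real) set" where
  "vedgeY L j a b = {real_of_int a * mh powi (- j)} \<times>
                   {real_of_int b * mv L powi (- j) .. real_of_int (b + 1) * mv L powi (- j)}"

definition cell2X :: "int \<Rightarrow> int \<Rightarrow> int \<Rightarrow> int \<Rightarrow> (real \<times> real) set set" where
  "cell2X L j a b = qmap L j ` rectY L j a b"

definition vcellX :: "int \<Rightarrow> int \<Rightarrow> int \<Rightarrow> int \<Rightarrow> (real \<times> real) set set" where
  "vcellX L j a b = qmap L j ` vedgeY L j a b"

end

theory Submission
  imports Defs
begin

lemma gen_equiv_fst:
  assumes "\<And>p q. (p,q) \<in> S \<Longrightarrow> fst p = fst q" and "(p,q) \<in> gen_equiv S"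
  shows "fst p = (fst q :: real)"
  using assms(2) unfolding gen_equiv_def
proof (induction rule: rtrancl_induct)
  case base then show ?case by simp
next
  case (step y z) then show ?case using assms(1) by fastforce
qed

lemma Rbase_fst: "(p,q) \<in> Rbase L \<Longrightarrow> fst p = fst q"
  unfolding Rbase_def by (rule gen_equiv_fst) auto

lemma Rj_fst: "(p,q) \<in> Rj L j \<Longrightarrow> fst p = fst q"
  unfolding Rj_def
proof (rule gen_equiv_fst)
  fix p q assume "(p,q) \<in> (\<Union>i\<in>{i. i < j}. push L i (Rbase L))"
  then obtain i p0 q0 where "p = PhiPow L i p0" "q = PhiPow L i q0" "(p0,q0) \<in> Rbase L"
    unfolding push_def by blast
  then show "fst p = fst q" using Rbase_fst unfolding PhiPow_def by auto
qed

lemma qmap_fst: "q \<in> qmap L j p \<Longrightarrow> fst q = fst p"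
  unfolding qmap_def using Rj_fst by fastforce

lemma qmap_self: "p \<in> qmap L j p"
  unfolding qmap_def Rj_def gen_equiv_def by simp

lemma piMap_fst:
  assumes "x \<in> piMap L j (qmap L j p)"
  shows "fst x = fst p"
proof -
  have ne: "\<exists>q. q \<in> qmap L j p" using qmap_self by blast
  define q where "q = (SOME q. q \<in> qmap L j p)"
  have "q \<in> qmap L j p" unfolding q_def using someI_ex[OF ne] .
  hence "fst q = fst p" by (rule qmap_fst)
  moreover have "x \<in> qmap L (j+1) q" using assms unfolding piMap_def q_def by simp
  ultimately show ?thesis using qmap_fst by fastforce
qed

lemma wpos: "mh powi (- (j+1)) > 0" unfolding mh_def by simp

lemma wrel: "mh powi (- j) = 4 * mh powi (- (j+1))"
proof -
  have "mh powi (- j) = mh powi (- (j+1) + 1)" by simp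
  also have "\<dots> = mh powi (- (j+1)) * mh powi 1"
    by (rule power_int_add) (simp add: mh_def)
  finally show ?thesis by (simp add: mh_def)
qed

lemma edge_lemma:
  assumes "c \<in> cell2X L (j+1) A B" "c \<in> piMap L j ` vcellX L j a0 b"
  shows "A \<le> 4*a0 \<and> 4*a0 \<le> A + 1"
proof -
  define w where "w = mh powi (- (j+1))"
  have w: "w > 0" unfolding w_def by (rule wpos)
  obtain r where r: "r \<in> rectY L (j+1) A B" "c = qmap L (j+1) r"
    using assms(1) unfolding cell2X_def by blast
  obtain p where p: "p \<in> vedgeY L j a0 b" "c = piMap L j (qmap L j p)"
    using assms(2) unfolding vcellX_def by blast
  have "fst r = fst p" using piMap_fst[of r L j p] qmap_self[of r L "j+1"] r p by simp
  moreover have "fst p = real_of_int (4*a0) * w"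
    using p(1) wrel[of j] unfolding vedgeY_def w_def by auto
  moreover have "real_of_int A * w \<le> fst r" "fst r \<le> real_of_int (A+1) * w"
    using r(1) unfolding rectY_def w_def by auto
  ultimately have "real_of_int A * w \<le> real_of_int (4*a0) * w"
       "real_of_int (4*a0) * w \<le> real_of_int (A+1) * w" by auto
  hence "real_of_int A \<le> real_of_int (4*a0)" "real_of_int (4*a0) \<le> real_of_int (A+1)"
    using w by (auto simp: mult_le_cancel_right)
  thus ?thesis by linarith
qed

lemma step_lemma:
  assumes "c \<in> cell2X L (j+1) A B" "c \<in> cell2X L (j+1) A' B'"
  shows "A' \<le> A + 1"
proof -
  define w where "w = mh powi (- (j+1))"
  have w: "w > 0" unfolding w_def by (rule wpos)
  obtain r where r: "r \<in> rectY L (j+1) A B" "c = qmap L (j+1) r"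
    using assms(1) unfolding cell2X_def by blast
  obtain r' where r': "r' \<in> rectY L (j+1) A' B'" "c = qmap L (j+1) r'"
    using assms(2) unfolding cell2X_def by blast
  have "r' \<in> qmap L (j+1) r" using qmap_self[of r' L "j+1"] r r' by simp
  hence "fst r' = fst r" by (rule qmap_fst)
  moreover have "real_of_int A' * w \<le> fst r'" "fst r \<le> real_of_int (A+1) * w"
    using r(1) r'(1) unfolding rectY_def w_def by auto
  ultimately have "real_of_int A' * w \<le> real_of_int (A+1) * w" by auto
  hence "real_of_int A' \<le> real_of_int (A+1)" using w by (auto simp: mult_le_cancel_right)
  thus ?thesis by linarith
qed

theorem mainTheorem7:
  fixes L j a b :: int and \<sigma> e1 e2 :: "(real \<times> real) set set"
    and n :: nat and sb :: "nat \<Rightarrow> (real \<times> real) set set"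
  assumes "L \<ge> 100"
    and "\<sigma> = cell2X L j a b"
    and "(e1 = vcellX L j a b \<and> e2 = vcellX L j (a + 1) b) \<or>
         (e1 = vcellX L j (a + 1) b \<and> e2 = vcellX L j a b)"
    and "n \<ge> 1"
    and "\<forall>k<n. \<exists>a' b'. sb k = cell2X L (j + 1) a' b'"
    and "\<forall>k<n. sb k \<subseteq> piMap L j ` \<sigma>"
    and "\<forall>k. k + 1 < n \<longrightarrow> sb k \<inter> sb (k + 1) \<noteq> {}"
    and "sb 0 \<inter> piMap L j ` e1 \<noteq> {}"
    and "sb (n - 1) \<inter> piMap L j ` e2 \<noteq> {}"
  shows "real n \<ge> mh"
proof -
  obtain A B where AB: "\<And>k. k < n \<Longrightarrow> sb k = cell2X L (j + 1) (A k) (B k)"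
    using assms(5) by metis
  have st: "A (Suc k) \<le> A k + 1 \<and> A k \<le> A (Suc k) + 1" if "Suc k < n" for k
  proof -
    have "sb k \<inter> sb (Suc k) \<noteq> {}" using assms(7) that by simp
    then obtain c where "c \<in> sb k" "c \<in> sb (Suc k)" by blast
    then show ?thesis using AB[of k] AB[of "Suc k"] that step_lemma by auto
  qed
  have up: "A k \<le> A 0 + int k" if "k < n" for k
    using that proof (induction k)
    case (Suc k) then show ?case using st[of k] by simp
  qed simp
  have lo: "A 0 - int k \<le> A k" if "k < n" for k
    using that proof (induction k)
    case (Suc k) then show ?case using st[of k] by simp
  qed simp
  have n0: "0 < n" "n - 1 < n" using assms(4) by auto
  obtain c0 where c0: "c0 \<in> sb 0" "c0 \<in> piMap L j ` e1" using assms(8) by blast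
  obtain c1 where c1: "c1 \<in> sb (n-1)" "c1 \<in> piMap L j ` e2" using assms(9) by blast
  have "int n \<ge> 4"
    using assms(3)
  proof
    assume h: "e1 = vcellX L j a b \<and> e2 = vcellX L j (a + 1) b"
    have "A 0 \<le> 4*a" using edge_lemma[of c0 L j "A 0" "B 0" a b] c0 h AB[OF n0(1)] by auto
    moreover have "4*(a+1) \<le> A (n-1) + 1"
      using edge_lemma[of c1 L j "A (n-1)" "B (n-1)" "a+1" b] c1 h AB[OF n0(2)] by auto
    moreover have "A (n-1) \<le> A 0 + int (n-1)" using up n0 by blast
    moreover have "int (n-1) = int n - 1" using n0 by simp
    ultimately show ?thesis by (simp add: algebra_simps)
  next
    assume h: "e1 = vcellX L j (a+1) b \<and> e2 = vcellX L j a b"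
    have "A 0 \<le> 4*(a+1)" "4*(a+1) \<le> A 0 + 1"
      using edge_lemma[of c0 L j "A 0" "B 0" "a+1" b] c0 h AB[OF n0(1)] by auto
    moreover have "A (n-1) \<le> 4*a"
      using edge_lemma[of c1 L j "A (n-1)" "B (n-1)" a b] c1 h AB[OF n0(2)] by auto
    moreover have "A 0 - int (n-1) \<le> A (n-1)" using lo n0 by blast
    moreover have "int (n-1) = int n - 1" using n0 by simp
    ultimately show ?thesis by (simp add: algebra_simps)
  qed
  thus ?thesis unfolding mh_def by simp
qed

end
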